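(* Let $U$ be a Hilbert space, $T: U\rightrightarrows U$, $(\hat u,\hat w)\in\operatorname{graph}T$, $N,M\in\mathcal{L}(U;U)$ with $M\ge0$, and $\gamma\in[0,1]$. Then $(N,\gamma M)$-strong submonotonicity of $T$ at $(\hat u,\hat w)$ implies $(\gamma M, N, M)$-partial strong submonotonicity at the same point. If $T^{-1}(\hat w)=\{\hat u\}$ is a singleton, these two properties are equivalent.
   Context: For $T\in\mathcal{L}(U;U)$: $\langle x,z\rangle_T:=\langle Tx,z\rangle$, $\|x\|^2_T:=\langle Tx,x\rangle$, $\operatorname{dist}^2_T(z,A):=\inf_{u\in A}\|z-u\|^2_T$. For $\Xi,N,M\in\mathcal{L}(U;U)$ with $M\ge0$, $T$ is $(\Xi,N,M)$-partially strongly submonotone at $(\hat u,\hat w)$ if there is a neighbourhood $\mathcal{U}\ni\hat u$ with $\inf_{u^*\in T^{-1}(\hat w)}(\langle w-\hat w,u-u^*\rangle_N + \|u-u^*\|^2_{M-\Xi}) \ge \operatorname{dist}^2_M(u,T^{-1}(\hat w))$ for all $u\in\mathcal{U}$, $w\in T(u)$. $T$ is $(N,M)$-strongly submonotone if it is $(M,N,M)$-partially strongly submonotone. *)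

theory Defs
  imports "HOL-Analysis.Analysis"
begin

definition op_inner :: "('a::real_inner \<Rightarrow> 'a) \<Rightarrow> 'a \<Rightarrow> 'a \<Rightarrow> real" where
  "op_inner T x z = inner (T x) z"

definition op_norm2 :: "('a::real_inner \<Rightarrow> 'a) \<Rightarrow> 'a \<Rightarrow> real" where
  "op_norm2 T x = inner (T x) x"

definition op_dist2 :: "('a::real_inner \<Rightarrow> 'a) \<Rightarrow> 'a \<Rightarrow> 'a set \<Rightarrow> ereal" where
  "op_dist2 T z A = (INF u\<in>A. ereal (op_norm2 T (z - u)))"

definition pos_semidef :: "('a::real_inner \<Rightarrow> 'a) \<Rightarrow> bool" where
  "pos_semidef M \<longleftrightarrow> (\<forall>x. 0 \<le> inner (M x) x)"

definition inv_at :: "('a \<Rightarrow> 'b set) \<Rightarrow> 'b \<Rightarrow> 'a set" where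
  "inv_at T w = {u. w \<in> T u}"

definition partial_strong_submonotone ::
  "('a::real_inner \<Rightarrow> 'a set) \<Rightarrow> ('a \<Rightarrow> 'a) \<Rightarrow> ('a \<Rightarrow> 'a) \<Rightarrow> ('a \<Rightarrow> 'a) \<Rightarrow> 'a \<Rightarrow> 'a \<Rightarrow> bool" where
  "partial_strong_submonotone T Xi N M uh wh \<longleftrightarrow>
     (\<exists>U. open U \<and> uh \<in> U \<and>
        (\<forall>u\<in>U. \<forall>w\<in>T u.
           (INF us\<in>inv_at T wh. ereal (op_inner N (w - wh) (u - us)
                                      + op_norm2 (\<lambda>x. M x - Xi x) (u - us)))
           \<ge> op_dist2 M u (inv_at T wh)))"

definition strong_submonotone ::
  "('a::real_inner \<Rightarrow> 'a set) \<Rightarrow> ('a \<Rightarrow> 'a) \<Rightarrow> ('a \<Rightarrow> 'a) \<Rightarrow> 'a \<Rightarrow> 'a \<Rightarrow> bool" where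
  "strong_submonotone T N M uh wh \<longleftrightarrow> partial_strong_submonotone T M N M uh wh"

end

theory Submission
  imports Defs
begin

lemma norm2_zero: "op_norm2 (\<lambda>x. (c::real) *\<^sub>R M x - c *\<^sub>R M x) y = 0"
  by (simp add: op_norm2_def)

lemma norm2_zero0[simp]: "op_norm2 (\<lambda>x. 0) y = 0"
  by (simp add: op_norm2_def)

lemma norm2_diff: "op_norm2 (\<lambda>x. M x - (c::real) *\<^sub>R M x) y = (1 - c) * op_norm2 M y"
  by (simp add: op_norm2_def inner_diff_left algebra_simps)

lemma norm2_scale: "op_norm2 (\<lambda>x. (c::real) *\<^sub>R M x) y = c * op_norm2 M y"
  by (simp add: op_norm2_def)

theorem corollary4p4:
  fixes T :: "'a::{real_inner, complete_space} \<Rightarrow> 'a set"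
    and N M :: "'a \<Rightarrow> 'a" and uh wh :: 'a and \<gamma> :: real
  assumes "wh \<in> T uh"
    and "bounded_linear N" and "bounded_linear M" and "pos_semidef M"
    and "0 \<le> \<gamma>" and "\<gamma> \<le> 1"
  shows "(strong_submonotone T N (\<lambda>x. \<gamma> *\<^sub>R M x) uh wh
            \<longrightarrow> partial_strong_submonotone T (\<lambda>x. \<gamma> *\<^sub>R M x) N M uh wh)
       \<and> (inv_at T wh = {uh} \<longrightarrow>
            (strong_submonotone T N (\<lambda>x. \<gamma> *\<^sub>R M x) uh wh
              \<longleftrightarrow> partial_strong_submonotone T (\<lambda>x. \<gamma> *\<^sub>R M x) N M uh wh))"
proof -
  let ?S = "inv_at T wh"
  have uhS: "uh \<in> ?S" using assms(1) by (simp add: inv_at_def)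
  have A: "partial_strong_submonotone T (\<lambda>x. \<gamma> *\<^sub>R M x) N M uh wh"
    if H: "strong_submonotone T N (\<lambda>x. \<gamma> *\<^sub>R M x) uh wh"
  proof -
    from H obtain U where U: "open U" "uh \<in> U" and
      HU: "\<And>u w. u \<in> U \<Longrightarrow> w \<in> T u \<Longrightarrow>
        (INF us\<in>?S. ereal (op_inner N (w - wh) (u - us)
            + op_norm2 (\<lambda>x. \<gamma> *\<^sub>R M x - \<gamma> *\<^sub>R M x) (u - us)))
        \<ge> op_dist2 (\<lambda>x. \<gamma> *\<^sub>R M x) u ?S"
      unfolding strong_submonotone_def partial_strong_submonotone_def by blast
    show ?thesis unfolding partial_strong_submonotone_def
    proof (intro exI[of _ U] conjI ballI U(1) U(2))
      fix u w assume u: "u \<in> U" and w: "w \<in> T u"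
      let ?D = "op_dist2 M u ?S"
      have D0: "0 \<le> ?D" unfolding op_dist2_def
        by (rule INF_greatest) (use assms(4) in \<open>simp add: pos_semidef_def op_norm2_def\<close>)
      have Dle: "\<And>v. v \<in> ?S \<Longrightarrow> ?D \<le> ereal (op_norm2 M (u - v))"
        unfolding op_dist2_def by (rule INF_lower)
      from Dle[OF uhS] D0 obtain r where r: "?D = ereal r"
        by (cases ?D) auto
      have r0: "0 \<le> r" using D0 r by simp
      have rle: "\<And>v. v \<in> ?S \<Longrightarrow> r \<le> op_norm2 M (u - v)" using Dle r by simp
      have Dg: "ereal (\<gamma> * r) \<le> op_dist2 (\<lambda>x. \<gamma> *\<^sub>R M x) u ?S"
        unfolding op_dist2_def norm2_scale
        by (rule INF_greatest) (use rle assms(5) in \<open>simp add: mult_left_mono\<close>)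
      show "?D \<le> (INF us\<in>?S. ereal (op_inner N (w - wh) (u - us)
              + op_norm2 (\<lambda>x. M x - \<gamma> *\<^sub>R M x) (u - us)))"
      proof (rule INF_greatest)
        fix us assume us: "us \<in> ?S"
        have "ereal (op_inner N (w - wh) (u - us)) \<ge> ereal (\<gamma> * r)"
          using order_trans[OF Dg HU[OF u w]] INF_lower[OF us,
            of "\<lambda>us. ereal (op_inner N (w - wh) (u - us)
            + op_norm2 (\<lambda>x. \<gamma> *\<^sub>R M x - \<gamma> *\<^sub>R M x) (u - us))"]
          by (simp add: norm2_zero) (meson ereal_less_eq(3) order_trans)
        hence a: "\<gamma> * r \<le> op_inner N (w - wh) (u - us)" by simp
        have b: "(1 - \<gamma>) * r \<le> (1 - \<gamma>) * op_norm2 M (u - us)"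
          using rle[OF us] assms(6) by (simp add: mult_left_mono)
        show "?D \<le> ereal (op_inner N (w - wh) (u - us)
              + op_norm2 (\<lambda>x. M x - \<gamma> *\<^sub>R M x) (u - us))"
          using a b by (simp add: r norm2_diff algebra_simps)
      qed
    qed
  qed
  have B: "strong_submonotone T N (\<lambda>x. \<gamma> *\<^sub>R M x) uh wh"
    if S: "?S = {uh}" and H: "partial_strong_submonotone T (\<lambda>x. \<gamma> *\<^sub>R M x) N M uh wh"
  proof -
    from H obtain U where U: "open U" "uh \<in> U" and
      HU: "\<And>u w. u \<in> U \<Longrightarrow> w \<in> T u \<Longrightarrow>
        (INF us\<in>?S. ereal (op_inner N (w - wh) (u - us)
            + op_norm2 (\<lambda>x. M x - \<gamma> *\<^sub>R M x) (u - us)))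
        \<ge> op_dist2 M u ?S"
      unfolding partial_strong_submonotone_def by blast
    show ?thesis unfolding strong_submonotone_def partial_strong_submonotone_def
    proof (intro exI[of _ U] conjI ballI U(1) U(2))
      fix u w assume u: "u \<in> U" and w: "w \<in> T u"
      have "op_norm2 M (u - uh) \<le> op_inner N (w - wh) (u - uh)
              + (1 - \<gamma>) * op_norm2 M (u - uh)"
        using HU[OF u w] by (simp add: S op_dist2_def norm2_diff)
      thus "op_dist2 (\<lambda>x. \<gamma> *\<^sub>R M x) u ?S \<le> (INF us\<in>?S. ereal (op_inner N (w - wh) (u - us)
            + op_norm2 (\<lambda>x. \<gamma> *\<^sub>R M x - \<gamma> *\<^sub>R M x) (u - us)))"
        by (simp add: S op_dist2_def norm2_zero norm2_scale algebra_simps)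
    qed
  qed
  show ?thesis using A B by blast
qed

end
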